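(* Let $D$ be a finite-dimensional central division algebra over a field $F$ of characteristic $0$ with involution $\ast$, and let $K$ be a maximal subfield of $D$ with $K^\ast\subseteq K$. Then there exists a map $f\colon D\to K$ such that $f(1)=1$, $f(z^\ast)=f(z)^\ast$ for all $z\in D$, and $f(kzl)=kf(z)l$ for all $k,l\in K$ and $z\in D$ (in particular $f$ is additive).
   Context: A maximal subfield is a subfield equal to its own centralizer in $D$. An involution is an additive anti-automorphism of order at most $2$. *)

theory Defs
  imports Main
begin

definition centralizer :: "'a::ring set \<Rightarrow> 'a set" where
  "centralizer S = {x. \<forall>s\<in>S. x * s = s * x}"

abbreviation center :: "'a::ring set" where
  "center \<equiv> centralizer UNIV"

text \<open>D is finite-dimensional over its center (the base field F of a central algebra).\<close>
definition finite_dim_over_center :: "'a::division_ring itself \<Rightarrow> bool" where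
  "finite_dim_over_center _ \<longleftrightarrow>
     (\<exists>B::'a set. finite B \<and>
        (\<forall>x. \<exists>c. (\<forall>b\<in>B. c b \<in> center) \<and> x = (\<Sum>b\<in>B. c b * b)))"

definition is_involution :: "('a::ring \<Rightarrow> 'a) \<Rightarrow> bool" where
  "is_involution s \<longleftrightarrow>
     (\<forall>x y. s (x + y) = s x + s y) \<and>
     (\<forall>x y. s (x * y) = s y * s x) \<and>
     (\<forall>x. s (s x) = x)"

definition is_subfield :: "'a::division_ring set \<Rightarrow> bool" where
  "is_subfield K \<longleftrightarrow>
     0 \<in> K \<and> 1 \<in> K \<and>
     (\<forall>x\<in>K. \<forall>y\<in>K. x + y \<in> K \<and> x * y \<in> K \<and> x * y = y * x) \<and>
     (\<forall>x\<in>K. - x \<in> K \<and> inverse x \<in> K)"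

definition maximal_subfield :: "'a::division_ring set \<Rightarrow> bool" where
  "maximal_subfield K \<longleftrightarrow> is_subfield K \<and> centralizer K = K"

end

theory Submission imports Defs "HOL.Vector_Spaces" begin

lemma center_add: "x \<in> (center::'a::division_ring set) \<Longrightarrow> y \<in> center \<Longrightarrow> x + y \<in> center"
  by (auto simp: centralizer_def algebra_simps)
lemma center_mult: "x \<in> (center::'a::division_ring set) \<Longrightarrow> y \<in> center \<Longrightarrow> x * y \<in> center"
  unfolding centralizer_def
proof safe
  fix s assume "\<forall>s\<in>UNIV. x * s = s * x" "\<forall>s\<in>UNIV. y * s = s * y"
  then have "x * s = s * x" "y * s = s * y" by auto
  then show "x * y * s = s * (x * y)" by (metis mult.assoc)
qed
lemma center_uminus: "x \<in> (center::'a::division_ring set) \<Longrightarrow> - x \<in> center"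
  by (auto simp: centralizer_def)
lemma center_zero: "0 \<in> (center::'a::division_ring set)" by (auto simp: centralizer_def)
lemma center_one: "1 \<in> (center::'a::division_ring set)" by (auto simp: centralizer_def)
lemma inverse_commute:
  fixes x y :: "'a::division_ring"
  assumes "x * y = y * x" shows "inverse x * y = y * inverse x"
proof (cases "x = 0")
  case False
  have "inverse x * y = inverse x * (y * x) * inverse x" using False by (simp add: mult.assoc)
  also have "\<dots> = inverse x * (x * y) * inverse x" using assms by simp
  also have "\<dots> = y * inverse x" using False by (simp add: mult.assoc[symmetric])
  finally show ?thesis .
qed simp
lemma center_inverse: "x \<in> (center::'a::division_ring set) \<Longrightarrow> inverse x \<in> center"
  by (auto simp: centralizer_def intro: inverse_commute)
lemma centerD: "x \<in> (center::'a::division_ring set) \<Longrightarrow> x * y = y * x"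
  by (auto simp: centralizer_def)

typedef (overloaded) ('a::division_ring) cent = "center :: 'a set"
  by (rule exI[of _ 0]) (rule center_zero)

lemmas Rep_c = Rep_cent[simplified]
lemma Abs_inv: "x \<in> center \<Longrightarrow> Rep_cent (Abs_cent x) = x"
  by (rule Abs_cent_inverse)

instantiation cent :: (division_ring) field
begin
definition "0 = Abs_cent 0"
definition "1 = Abs_cent 1"
definition "a + b = Abs_cent (Rep_cent a + Rep_cent b)"
definition "- a = Abs_cent (- Rep_cent a)"
definition "a - b = Abs_cent (Rep_cent a - Rep_cent b)"
definition "a * b = Abs_cent (Rep_cent a * Rep_cent b)"
definition "inverse a = Abs_cent (inverse (Rep_cent a))"
definition "a div b = Abs_cent (Rep_cent a / Rep_cent b)"

lemma rep_simps:
  "Rep_cent (0::'a cent) = 0" "Rep_cent (1::'a cent) = 1"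
  "Rep_cent (a + b) = Rep_cent a + Rep_cent b"
  "Rep_cent (- a) = - Rep_cent a"
  "Rep_cent (a - b) = Rep_cent a - Rep_cent b"
  "Rep_cent (a * b) = Rep_cent a * Rep_cent b"
  "Rep_cent (inverse a) = inverse (Rep_cent a)"
  "Rep_cent (a div b) = Rep_cent a / Rep_cent b"
  for a b :: "'a cent"
proof -
  have a: "Rep_cent a \<in> center" and b: "Rep_cent b \<in> center" by (rule Rep_cent)+
  show "Rep_cent (0::'a cent) = 0" unfolding zero_cent_def by (rule Abs_inv[OF center_zero])
  show "Rep_cent (1::'a cent) = 1" unfolding one_cent_def by (rule Abs_inv[OF center_one])
  show "Rep_cent (a + b) = Rep_cent a + Rep_cent b" unfolding plus_cent_def by (rule Abs_inv[OF center_add[OF a b]])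
  show "Rep_cent (- a) = - Rep_cent a" unfolding uminus_cent_def by (rule Abs_inv[OF center_uminus[OF a]])
  show "Rep_cent (a - b) = Rep_cent a - Rep_cent b" unfolding minus_cent_def
    by (rule Abs_inv) (simp only: diff_conv_add_uminus, rule center_add[OF a center_uminus[OF b]])
  show "Rep_cent (a * b) = Rep_cent a * Rep_cent b" unfolding times_cent_def by (rule Abs_inv[OF center_mult[OF a b]])
  show "Rep_cent (inverse a) = inverse (Rep_cent a)" unfolding inverse_cent_def by (rule Abs_inv[OF center_inverse[OF a]])
  show "Rep_cent (a div b) = Rep_cent a / Rep_cent b" unfolding divide_cent_def
    by (rule Abs_inv) (simp only: divide_inverse, rule center_mult[OF a center_inverse[OF b]])
qed

lemma cent_eqI: "Rep_cent a = Rep_cent b \<Longrightarrow> a = b"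
  by (simp add: Rep_cent_inject)

instance
proof
  fix a b c :: "'a cent"
  show "a * b * c = a * (b * c)" by (rule cent_eqI) (simp add: rep_simps mult.assoc)
  show "a * b = b * a" by (rule cent_eqI) (simp only: rep_simps, rule centerD, rule Rep_cent)
  show "1 * a = a" by (rule cent_eqI) (simp add: rep_simps)
  show "(a + b) * c = a * c + b * c" by (rule cent_eqI) (simp add: rep_simps distrib_right)
  show "(0::'a cent) \<noteq> 1" by (metis rep_simps(1,2) zero_neq_one)
  show "a + b + c = a + (b + c)" by (rule cent_eqI) (simp add: rep_simps add.assoc)
  show "a + b = b + a" by (rule cent_eqI) (simp add: rep_simps add.commute)
  show "0 + a = a" by (rule cent_eqI) (simp add: rep_simps)
  show "- a + a = 0" by (rule cent_eqI) (simp add: rep_simps)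
  show "a - b = a + - b" by (rule cent_eqI) (simp add: rep_simps)
  show "a \<noteq> 0 \<Longrightarrow> inverse a * a = 1"
    by (rule cent_eqI) (simp add: rep_simps Rep_cent_inject[symmetric])
  show "a div b = a * inverse b" by (rule cent_eqI) (simp add: rep_simps divide_inverse)
  show "inverse (0::'a cent) = 0" by (rule cent_eqI) (simp add: rep_simps)
qed
end

interpretation cv: vector_space "\<lambda>(c::'a::division_ring cent) (x::'a). Rep_cent c * x"
  by standard (simp_all add: distrib_left distrib_right rep_simps mult.assoc)


lemma findim_span:
  assumes "finite_dim_over_center TYPE('d::division_ring)"
  obtains B :: "'d::division_ring set" where "finite B" "\<And>x. x \<in> cv.span B"
proof -
  obtain B :: "'d set" where B: "finite B" "\<And>x. \<exists>c. (\<forall>b\<in>B. c b \<in> center) \<and> x = (\<Sum>b\<in>B. c b * b)"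
    using assms unfolding finite_dim_over_center_def by blast
  have "x \<in> cv.span B" for x
  proof -
    obtain c where c: "\<forall>b\<in>B. c b \<in> center" "x = (\<Sum>b\<in>B. c b * b)" using B(2) by blast
    have "x = (\<Sum>b\<in>B. Rep_cent (Abs_cent (c b)) * b)"
      using c by (simp add: Abs_inv)
    also have "\<dots> \<in> cv.span B"
      by (rule cv.span_sum) (rule cv.span_scale, rule cv.span_base)
    finally show ?thesis .
  qed
  then show ?thesis using B(1) that by blast
qed

lemma algebraic:
  fixes a :: "'d::division_ring"
  assumes "finite_dim_over_center TYPE('d)"
  shows "\<exists>n c. (\<forall>k. c k \<in> center) \<and> (\<exists>k\<le>n. c k \<noteq> 0) \<and> (\<Sum>k\<le>n. c k * a^k) = 0"
proof -
  obtain B :: "'d set" where B: "finite B" "\<And>x. x \<in> cv.span B" using findim_span[OF assms] by blast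
  define N where "N = card B"
  show ?thesis
  proof (cases "inj_on (\<lambda>k. a^k) {..N}")
    case False
    then obtain i j where ij: "i \<le> N" "j \<le> N" "i \<noteq> j" "a^i = a^j"
      unfolding inj_on_def by auto
    define c where "c = (\<lambda>k. if k = i then (1::'d) else if k = j then -1 else 0)"
    have cc: "\<forall>k. c k \<in> center" by (auto simp: c_def center_one center_zero center_uminus)
    have "(\<Sum>k\<le>max i j. c k * a^k) = (\<Sum>k\<in>{i,j}. c k * a^k)"
      by (rule sum.mono_neutral_right) (auto simp: c_def)
    also have "\<dots> = 0" using ij by (simp add: c_def)
    finally show ?thesis using cc ij by (intro exI[of _ "max i j"] exI[of _ c]) (auto simp: c_def)
  next
    case True
    define S where "S = (\<lambda>k. a^k) ` {..N}"
    have cardS: "card S = N + 1" using True by (simp add: S_def card_image)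
    have "cv.dependent S"
    proof (rule ccontr)
      assume "\<not> cv.dependent S"
      then have "card S \<le> card B" using cv.independent_span_bound[OF B(1)] B(2) by blast
      then show False using cardS N_def by simp
    qed
    then obtain t u where tu: "finite t" "t \<subseteq> S" "(\<Sum>v\<in>t. Rep_cent (u v) * v) = 0" "\<exists>v\<in>t. u v \<noteq> 0"
      unfolding cv.dependent_explicit by blast
    define c where "c = (\<lambda>k. if a^k \<in> t then Rep_cent (u (a^k)) else 0)"
    have cc: "\<forall>k. c k \<in> center" by (auto simp: c_def center_zero Rep_cent[simplified])
    define I where "I = {k\<in>{..N}. a^k \<in> t}"
    have tI: "t = (\<lambda>k. a^k) ` I" using tu(2) by (auto simp: I_def S_def)
    have injI: "inj_on (\<lambda>k. a^k) I" using True by (rule inj_on_subset) (auto simp: I_def)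
    have "(\<Sum>k\<le>N. c k * a^k) = (\<Sum>k\<in>I. c k * a^k)"
      by (rule sum.mono_neutral_right) (auto simp: c_def I_def)
    also have "\<dots> = (\<Sum>k\<in>I. Rep_cent (u (a^k)) * a^k)"
      by (rule sum.cong) (auto simp: c_def I_def)
    also have "\<dots> = (\<Sum>v\<in>t. Rep_cent (u v) * v)"
      unfolding tI by (rule sum.reindex[OF injI, symmetric, unfolded comp_def])
    also have "\<dots> = 0" by (rule tu(3))
    finally have sum0: "(\<Sum>k\<le>N. c k * a^k) = 0" .
    obtain v where v: "v \<in> t" "u v \<noteq> 0" using tu(4) by blast
    then obtain k where k: "k \<in> I" "v = a^k" unfolding tI by blast
    have "Rep_cent (u v) \<noteq> 0"
    proof
      assume "Rep_cent (u v) = 0"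
      then have "Rep_cent (u v) = Rep_cent 0" by (simp only: rep_simps)
      then show False using v(2) by (simp only: Rep_cent_inject)
    qed
    then have "c k \<noteq> 0" using k v by (simp add: c_def)
    moreover have "k \<le> N" using k by (auto simp: I_def)
    ultimately show ?thesis using cc sum0 by blast
  qed
qed


fun SS :: "'d::ring_1 \<Rightarrow> 'd \<Rightarrow> nat \<Rightarrow> 'd" where
  "SS a z 0 = 0"
| "SS a z (Suc k) = a * SS a z k + z * a^k"

lemma SS_comm: "a * SS a z k = SS a z k * a + a^k * z - z * a^k"
proof (induction k)
  case (Suc k)
  have "a * SS a z (Suc k) = a * (a * SS a z k) + a * z * a^k"
    by (simp add: distrib_left mult.assoc)
  also have "\<dots> = a * (SS a z k * a + a^k * z - z * a^k) + a * z * a^k" using Suc by simp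
  also have "\<dots> = (a * SS a z k) * a + a^(Suc k) * z - z * a^(Suc k) + z * a^k * a"
    by (simp add: algebra_simps mult.assoc power_commutes)
  also have "\<dots> = SS a z (Suc k) * a + a^(Suc k) * z - z * a^(Suc k)"
    by (simp add: algebra_simps)
  finally show ?case .
qed simp

lemma SS_one: "SS a 1 (Suc k) = of_nat (Suc k) * a^k"
proof (induction k)
  case (Suc k)
  have "SS a 1 (Suc (Suc k)) = a * (of_nat (Suc k) * a^k) + a^Suc k" using Suc by simp
  also have "\<dots> = of_nat (Suc k) * a^Suc k + a^Suc k"
    by (metis mult.assoc mult_of_nat_commute power_Suc)
  also have "\<dots> = of_nat (Suc (Suc k)) * a^Suc k" by (simp add: algebra_simps)
  finally show ?case .
qed simp

lemma SS_add: "SS a (z + w) k = SS a z k + SS a w k"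
  by (induction k) (simp_all add: algebra_simps)

lemma SS_commb:
  assumes "b * a = a * b" "b * z = z * b"
  shows "b * SS a z k = SS a z k * b"
proof (induction k)
  case (Suc k)
  have ba: "b * a^k = a^k * b" using power_commuting_commutes[of a b k] assms(1) by simp
  have "b * SS a z (Suc k) = (b * a) * SS a z k + (b * z) * a^k" by (simp add: algebra_simps mult.assoc)
  also have "\<dots> = a * (b * SS a z k) + z * (b * a^k)" using assms by (simp add: mult.assoc)
  also have "\<dots> = SS a z (Suc k) * b" using Suc ba by (simp add: algebra_simps mult.assoc)
  finally show ?case .
qed simp

lemma SS_bimod:
  assumes "x * a = a * x" "y * a = a * y"
  shows "SS a (x * z * y) k = x * SS a z k * y"
proof (induction k)
  case (Suc k)
  have ya: "y * a^k = a^k * y" using power_commuting_commutes[of a y k] assms(2) by simp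
  have "SS a (x * z * y) (Suc k) = a * (x * SS a z k * y) + x * z * (y * a^k)"
    using Suc by (simp add: mult.assoc)
  also have "\<dots> = x * (a * SS a z k) * y + x * (z * a^k) * y"
    using ya assms(1) by (metis mult.assoc)
  also have "\<dots> = x * SS a z (Suc k) * y" by (simp add: distrib_left distrib_right)
  finally show ?case .
qed simp


lemma of_nat_center: "of_nat n \<in> (center :: 'd::division_ring set)"
  by (auto simp: centralizer_def mult_of_nat_commute)

lemma step:
  fixes a :: "'d::{division_ring, ring_char_0}" and K :: "'d set"
  assumes fd: "finite_dim_over_center TYPE('d)"
    and Ka: "\<forall>k\<in>K. k * a = a * k"
  shows "\<exists>g. (\<forall>z. a * g z = g z * a) \<and> g 1 = 1 \<and> (\<forall>z w. g (z + w) = g z + g w) \<and>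
     (\<forall>k\<in>K. \<forall>l\<in>K. \<forall>z. g (k * z * l) = k * g z * l) \<and>
     (\<forall>b. b * a = a * b \<longrightarrow> (\<forall>z. b * z = z * b \<longrightarrow> b * g z = g z * b))"
proof -
  define P where "P n \<longleftrightarrow> (\<exists>c. (\<forall>k. c k \<in> center) \<and> (\<exists>k\<le>n. c k \<noteq> 0) \<and> (\<Sum>k\<le>n. c k * a^k) = 0)" for n
  have ex: "\<exists>n. P n" using algebraic[OF fd, of a] unfolding P_def by blast
  define n where "n = (LEAST n. P n)"
  have Pn: "P n" unfolding n_def by (rule LeastI_ex[OF ex])
  have minP: "\<not> P m" if "m < n" for m using not_less_Least[of m P] that unfolding n_def by blast
  obtain c where c: "\<And>k. c k \<in> center" "\<exists>k\<le>n. c k \<noteq> 0" "(\<Sum>k\<le>n. c k * a^k) = 0"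
    using Pn unfolding P_def by blast
  have n0: "n \<noteq> 0"
  proof
    assume "n = 0"
    then show False using c(2,3) by simp
  qed
  then obtain m where nm: "n = Suc m" by (cases n) auto
  define H where "H z = (\<Sum>k\<le>n. c k * SS a z k)" for z
  define d where "d j = c (Suc j) * of_nat (Suc j)" for j
  have H1: "H 1 = (\<Sum>j\<le>m. d j * a^j)"
    unfolding H_def nm sum.atMost_Suc_shift by (simp add: SS_one d_def mult.assoc del: SS.simps(2) of_nat_Suc)
  have cn: "c n \<noteq> 0"
  proof
    assume cn0: "c n = 0"
    obtain k where k: "k \<le> n" "c k \<noteq> 0" using c(2) by blast
    have "k \<le> m" using k cn0 nm by (cases "k = n") auto
    moreover have "(\<Sum>k\<le>m. c k * a^k) = 0" using c(3) cn0 nm by simp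
    ultimately have "P m" unfolding P_def using c(1) k(2) by blast
    then show False using minP nm by simp
  qed
  have H1nz: "H 1 \<noteq> 0"
  proof
    assume "H 1 = 0"
    moreover have "d m \<noteq> 0" using cn nm by (simp add: d_def del: of_nat_Suc)
    moreover have "\<forall>j. d j \<in> center" unfolding d_def using center_mult c(1) of_nat_center by blast
    ultimately have "P m" unfolding P_def H1 by blast
    then show False using minP nm by simp
  qed
  have ckz: "c k * z = z * c k" for k z by (rule centerD[OF c(1)])
  have Hcomm: "a * H z = H z * a" for z
  proof -
    have pt: "c k * (a * SS a z k) = (c k * SS a z k) * a + (c k * a^k) * z - z * (c k * a^k)" for k
    proof -
      have "c k * (a * SS a z k) = c k * (SS a z k * a + a^k * z - z * a^k)" by (simp add: SS_comm)
      also have "\<dots> = (c k * SS a z k) * a + (c k * a^k) * z - (c k * z) * a^k"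
        by (simp add: distrib_left right_diff_distrib mult.assoc)
      also have "\<dots> = (c k * SS a z k) * a + (c k * a^k) * z - z * (c k * a^k)"
        by (simp add: ckz mult.assoc)
      finally show ?thesis .
    qed
    have "a * H z = (\<Sum>k\<le>n. c k * (a * SS a z k))"
      unfolding H_def sum_distrib_left
      by (rule sum.cong) (simp_all add: mult.assoc[symmetric] centerD[OF c(1), symmetric])
    also have "\<dots> = (\<Sum>k\<le>n. (c k * SS a z k) * a + (c k * a^k) * z - z * (c k * a^k))"
      by (simp add: pt)
    also have "\<dots> = H z * a + (\<Sum>k\<le>n. c k * a^k) * z - z * (\<Sum>k\<le>n. c k * a^k)"
      unfolding H_def by (simp add: sum_subtractf sum.distrib sum_distrib_left sum_distrib_right)
    also have "\<dots> = H z * a" using c(3) by simp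
    finally show ?thesis .
  qed
  have Hadd: "H (z + w) = H z + H w" for z w
    unfolding H_def by (simp add: SS_add distrib_left sum.distrib)
  have Hbimod: "H (x * z * y) = x * H z * y" if "x * a = a * x" "y * a = a * y" for x y z
  proof -
    have "H (x * z * y) = (\<Sum>k\<le>n. x * (c k * SS a z k) * y)"
      unfolding H_def
    proof (rule sum.cong)
      fix k
      show "c k * SS a (x * z * y) k = x * (c k * SS a z k) * y"
        using SS_bimod[OF that, of z k] centerD[OF c(1), of k x] by (simp add: mult.assoc[symmetric])
    qed simp
    also have "\<dots> = x * H z * y" unfolding H_def by (simp add: sum_distrib_left sum_distrib_right)
    finally show ?thesis .
  qed
  have Hcommb: "b * H z = H z * b" if "b * a = a * b" "b * z = z * b" for b z
  proof -
    have "b * H z = (\<Sum>k\<le>n. c k * SS a z k * b)"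
      unfolding H_def sum_distrib_left
    proof (rule sum.cong)
      fix k
      show "b * (c k * SS a z k) = c k * SS a z k * b"
        using SS_commb[OF that, of k] centerD[OF c(1), of k b] by (metis mult.assoc)
    qed simp
    also have "\<dots> = H z * b" unfolding H_def by (simp add: sum_distrib_right)
    finally show ?thesis .
  qed
  define g where "g z = inverse (H 1) * H z" for z
  have invb: "b * inverse (H 1) = inverse (H 1) * b" if "b * a = a * b" for b
    using inverse_commute[of "H 1" b] Hcommb[OF that, of 1] by simp
  show ?thesis
  proof (intro exI[of _ g] conjI allI ballI impI)
    fix z
    show "a * g z = g z * a" unfolding g_def
      using invb[of a] Hcomm[of z] by (metis mult.assoc)
  next
    show "g 1 = 1" unfolding g_def using H1nz by simp
  next
    fix z w show "g (z + w) = g z + g w" unfolding g_def by (simp add: Hadd distrib_left)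
  next
    fix k l z assume k: "k \<in> K" and l: "l \<in> K"
    have ka: "k * a = a * k" and la: "l * a = a * l" using Ka k l by auto
    show "g (k * z * l) = k * g z * l" unfolding g_def
      using Hbimod[OF ka la, of z] invb[OF ka] by (metis mult.assoc)
  next
    fix b z assume ba: "b * a = a * b" and bz: "b * z = z * b"
    show "b * g z = g z * b" unfolding g_def
      using invb[OF ba] Hcommb[OF ba bz] by (metis mult.assoc)
  qed
qed


lemma compose:
  fixes K :: "'d::{division_ring, ring_char_0} set"
  assumes fd: "finite_dim_over_center TYPE('d)"
    and Kc: "\<forall>x\<in>K. \<forall>y\<in>K. x * y = y * x"
    and fin: "finite A" and AK: "A \<subseteq> K"
  shows "\<exists>f. (\<forall>z. \<forall>b\<in>A. b * f z = f z * b) \<and> f 1 = 1 \<and> (\<forall>z w. f (z + w) = f z + f w) \<and>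
     (\<forall>k\<in>K. \<forall>l\<in>K. \<forall>z. f (k * z * l) = k * f z * l)"
  using fin AK
proof (induction A rule: finite_induct)
  case empty
  show ?case by (rule exI[of _ id]) simp
next
  case (insert a A)
  then obtain f where f: "\<forall>z. \<forall>b\<in>A. b * f z = f z * b" "f 1 = 1" "\<forall>z w. f (z + w) = f z + f w"
     "\<forall>k\<in>K. \<forall>l\<in>K. \<forall>z. f (k * z * l) = k * f z * l" by auto
  have aK: "a \<in> K" using insert by auto
  have Ka: "\<forall>k\<in>K. k * a = a * k" using Kc aK by blast
  obtain g where g: "\<forall>z. a * g z = g z * a" "g 1 = 1" "\<forall>z w. g (z + w) = g z + g w"
     "\<forall>k\<in>K. \<forall>l\<in>K. \<forall>z. g (k * z * l) = k * g z * l"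
     "\<forall>b. b * a = a * b \<longrightarrow> (\<forall>z. b * z = z * b \<longrightarrow> b * g z = g z * b)"
    using step[OF fd Ka] by blast
  show ?case
  proof (intro exI[of _ "\<lambda>z. g (f z)"] conjI allI ballI)
    fix z b assume b: "b \<in> insert a A"
    show "b * g (f z) = g (f z) * b"
    proof (cases "b = a")
      case True then show ?thesis using g(1) by simp
    next
      case False
      then have bA: "b \<in> A" using b by simp
      then have "b * a = a * b" using Kc aK insert.prems by blast
      then show ?thesis using g(5) f(1) bA by blast
    qed
  qed (simp_all add: f g)
qed

theorem proposition2p3:
  fixes star :: "'d::{division_ring, ring_char_0} \<Rightarrow> 'd"
    and K :: "'d set"
  assumes "finite_dim_over_center TYPE('d)"
    and "is_involution star"
    and "maximal_subfield K"
    and "star ` K \<subseteq> K"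
  shows "\<exists>f :: 'd \<Rightarrow> 'd.
           (\<forall>z. f z \<in> K) \<and>
           f 1 = 1 \<and>
           (\<forall>z. f (star z) = star (f z)) \<and>
           (\<forall>k\<in>K. \<forall>l\<in>K. \<forall>z. f (k * z * l) = k * f z * l) \<and>
           (\<forall>x y. f (x + y) = f x + f y)"
proof -
  have sub: "is_subfield K" and CK: "centralizer K = K"
    using assms(3) unfolding maximal_subfield_def by auto
  have Kc: "\<forall>x\<in>K. \<forall>y\<in>K. x * y = y * x" using sub unfolding is_subfield_def by blast
  have Kadd: "x + y \<in> K" and Kmul: "x * y \<in> K" if "x \<in> K" "y \<in> K" for x y
    using sub that unfolding is_subfield_def by auto
  have cK: "x \<in> K" if "x \<in> center" for x
  proof -
    have "x \<in> centralizer K" using that unfolding centralizer_def by auto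
    then show ?thesis using CK by simp
  qed
  obtain B :: "'d set" where B: "finite B" "\<And>x. x \<in> cv.span B" using findim_span[OF assms(1)] by blast
  obtain A where A: "A \<subseteq> K" "cv.independent A" "K \<subseteq> cv.span A"
    using cv.maximal_independent_subset[of K] by blast
  have finA: "finite A" using cv.independent_span_bound[OF B(1) A(2)] B(2) by blast
  obtain f where f: "\<forall>z. \<forall>b\<in>A. b * f z = f z * b" "f 1 = 1" "\<forall>z w. f (z + w) = f z + f w"
     "\<forall>k\<in>K. \<forall>l\<in>K. \<forall>z. f (k * z * l) = k * f z * l"
    using compose[OF assms(1) Kc finA A(1)] by blast
  have fK: "f z \<in> K" for z
  proof -
    let ?C = "{y. f z * y = y * f z}"
    have "cv.subspace ?C"
    proof (rule cv.subspaceI)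
      fix c :: "'d cent" and x assume "x \<in> ?C"
      then show "Rep_cent c * x \<in> ?C"
        using centerD[OF Rep_cent[of c, simplified], of "f z"] by (simp add: mult.assoc[symmetric]) (metis mult.assoc)
    qed (auto simp: algebra_simps)
    moreover have "A \<subseteq> ?C" using f(1) by auto
    ultimately have "cv.span A \<subseteq> ?C" by (rule cv.span_minimal[rotated])
    then have "K \<subseteq> ?C" using A(3) by blast
    then have "f z \<in> centralizer K" unfolding centralizer_def by auto
    then show ?thesis using CK by simp
  qed
  have s_add: "star (x + y) = star x + star y" and s_mul: "star (x * y) = star y * star x"
    and s_inv: "star (star x) = x" for x y
    using assms(2) unfolding is_involution_def by auto
  have s1: "star 1 = 1"
  proof -
    have "star (star 1) = star 1 * star (star 1)" using s_mul[of "star 1" 1] by simp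
    then show ?thesis using s_inv[of 1] by simp
  qed
  have s0: "star 0 = 0" using s_add[of 0 0] by simp
  have s_nat: "star (of_nat n) = of_nat n" for n
    by (induction n) (simp_all add: s0 s1 s_add)
  define t where "t = inverse (2 :: 'd)"
  have two: "(2 :: 'd) \<noteq> 0" by simp
  have s2: "star 2 = 2" using s_nat[of 2] by simp
  have c2: "(2::'d) \<in> center" using of_nat_center[of 2] by simp
  have t2: "2 * t = 1" "t * 2 = 1" unfolding t_def by (rule right_inverse[OF two], rule left_inverse[OF two])
  have tc: "t \<in> center" unfolding t_def by (rule center_inverse[OF c2])
  have tK: "t \<in> K" using cK tc by blast
  have st: "star t = t"
  proof -
    have "star t * 2 = 1" using arg_cong[OF t2(1), of star] by (simp add: s_mul s2 s1)
    then have "star t * 2 * t = t" by simp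
    then show ?thesis using t2(1) by (simp add: mult.assoc)
  qed
  define h where "h z = (f z + star (f (star z))) * t" for z
  show ?thesis
  proof (intro exI[of _ h] conjI allI ballI)
    fix z
    have "star (f (star z)) \<in> K" using assms(4) fK by blast
    then show "h z \<in> K" unfolding h_def using fK tK by (intro Kmul Kadd) auto
  next
    have "h 1 = 2 * t" unfolding h_def using f(2) s1 by (simp add: one_add_one[symmetric] del: one_add_one)
    then show "h 1 = 1" using t2 by simp
  next
    fix z
    have "star (h z) = t * (star (f z) + f (star z))"
      unfolding h_def by (simp add: s_mul s_add s_inv st)
    also have "\<dots> = (f (star z) + star (f z)) * t"
      using centerD[OF tc, of "star (f z) + f (star z)"] by (simp add: add.commute)
    finally show "h (star z) = star (h z)" unfolding h_def by (simp add: s_inv)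
  next
    fix k l z assume k: "k \<in> K" and l: "l \<in> K"
    have skK: "star k \<in> K" and slK: "star l \<in> K" using assms(4) k l by auto
    have "star (f (star (k * z * l))) = star (star l * f (star z) * star k)"
      using f(4) skK slK by (simp add: s_mul mult.assoc)
    also have "\<dots> = k * star (f (star z)) * l" by (simp add: s_mul s_inv mult.assoc)
    finally have e: "star (f (star (k * z * l))) = k * star (f (star z)) * l" .
    have "h (k * z * l) = (k * (f z + star (f (star z))) * l) * t"
      unfolding h_def using f(4) k l e by (simp add: distrib_left distrib_right)
    also have "\<dots> = k * h z * l"
      unfolding h_def using centerD[OF tc, of l] by (simp add: mult.assoc)
    finally show "h (k * z * l) = k * h z * l" .
  next
    fix x y show "h (x + y) = h x + h y" unfolding h_def
      by (simp add: f(3) s_add distrib_right)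
  qed
qed

end
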